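(* Let $f$ satisfy Assumption A, $g$ satisfy Assumption B, $L>L_f$, and let $(u_k)$ be a sequence of proximal gradient iterates with parameter $L$. Then $u_{k+1}(x)-u_k(x)\to0$ for almost all $x\in\Omega$.
   Context: $\Omega\subset\mathbb{R}^n$ Lebesgue measurable with finite measure. Assumption A: $f:L^2(\Omega)\to\mathbb{R}$ bounded below, weakly lower semicontinuous, Fréchet differentiable, $\nabla f$ Lipschitz with constant $L_f$. Assumption B on $g:\mathbb{R}\to\mathbb{R}\cup\{+\infty\}$: (B1) lsc, symmetric, $g(0)=0$; (B2) $g(u)<\infty$ for some $u\ne0$; (B3) one of (B3a) $g$ twice differentiable on some $(0,\epsilon)$, $\limsup_{u\searrow0}g''(u)\in(-\infty,0)$; (B3b) same differentiability, $\lim_{u\searrow0}g''(u)=-\infty$; (B3c) $\liminf_{u\searrow0}g(u)>0$; (B4) $g\ge0$. Proximal gradient iterates with parameter $L>0$: $(u_k)_{k\ge0}\subset L^2(\Omega)$, arbitrary $u_0$, each $u_{k+1}$ a global minimizer over $L^2(\Omega)$ of $f(u_k)+\int_\Omega\nabla f(u_k)(u-u_k)\,dx+\frac L2\|u-u_k\|^2_{L^2(\Omega)}+\int_\Omega g(u(x))\,dx$. *)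

theory Defs
  imports "HOL-Analysis.Analysis"
begin

text \<open>Elements of L2(Omega) are represented by (Lebesgue measurable) real functions
  on the ambient Euclidean space that are square integrable over Omega; only the
  values on Omega matter and functions equal a.e. on Omega represent the same class.\<close>

definition L2 :: "'a::euclidean_space set \<Rightarrow> ('a \<Rightarrow> real) set" where
  "L2 \<Omega> = {u. u \<in> borel_measurable (lebesgue_on \<Omega>)
              \<and> integrable (lebesgue_on \<Omega>) (\<lambda>x. (u x)\<^sup>2)}"

definition L2_inner :: "'a::euclidean_space set \<Rightarrow> ('a \<Rightarrow> real) \<Rightarrow> ('a \<Rightarrow> real) \<Rightarrow> real" where
  "L2_inner \<Omega> u v = integral\<^sup>L (lebesgue_on \<Omega>) (\<lambda>x. u x * v x)"

definition L2_norm :: "'a::euclidean_space set \<Rightarrow> ('a \<Rightarrow> real) \<Rightarrow> real" where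
  "L2_norm \<Omega> u = sqrt (integral\<^sup>L (lebesgue_on \<Omega>) (\<lambda>x. (u x)\<^sup>2))"

definition assumptionA ::
  "'a::euclidean_space set \<Rightarrow> (('a \<Rightarrow> real) \<Rightarrow> real) \<Rightarrow> (('a \<Rightarrow> real) \<Rightarrow> ('a \<Rightarrow> real)) \<Rightarrow> real \<Rightarrow> bool" where
  "assumptionA \<Omega> f Df Lf \<longleftrightarrow>
     (\<forall>u\<in>L2 \<Omega>. \<forall>v\<in>L2 \<Omega>. (AE x in lebesgue_on \<Omega>. u x = v x) \<longrightarrow> f u = f v)
   \<and> (\<exists>c. \<forall>u\<in>L2 \<Omega>. c \<le> f u)
   \<and> (\<forall>us u. (\<forall>k. us k \<in> L2 \<Omega>) \<longrightarrow> u \<in> L2 \<Omega> \<longrightarrow>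
        (\<forall>w\<in>L2 \<Omega>. (\<lambda>k. L2_inner \<Omega> (us k) w) \<longlonglongrightarrow> L2_inner \<Omega> u w) \<longrightarrow>
        ereal (f u) \<le> liminf (\<lambda>k. ereal (f (us k))))
   \<and> (\<forall>u\<in>L2 \<Omega>. Df u \<in> L2 \<Omega>)
   \<and> (\<forall>u\<in>L2 \<Omega>. \<forall>e>0. \<exists>d>0. \<forall>v\<in>L2 \<Omega>. L2_norm \<Omega> (\<lambda>x. v x - u x) < d \<longrightarrow>
        \<bar>f v - f u - L2_inner \<Omega> (Df u) (\<lambda>x. v x - u x)\<bar> \<le> e * L2_norm \<Omega> (\<lambda>x. v x - u x))
   \<and> 0 \<le> Lf
   \<and> (\<forall>u\<in>L2 \<Omega>. \<forall>v\<in>L2 \<Omega>.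
        L2_norm \<Omega> (\<lambda>x. Df u x - Df v x) \<le> Lf * L2_norm \<Omega> (\<lambda>x. u x - v x))"

definition lsc_fun :: "(real \<Rightarrow> ereal) \<Rightarrow> bool" where
  "lsc_fun g \<longleftrightarrow> (\<forall>x. g x \<le> Liminf (at x) g)"

definition twice_diff_near0 :: "(real \<Rightarrow> ereal) \<Rightarrow> real \<Rightarrow> (real \<Rightarrow> real) \<Rightarrow> bool" where
  "twice_diff_near0 g eps h2 \<longleftrightarrow> (\<exists>h h1. \<forall>u\<in>{0<..<eps}.
      g u = ereal (h u) \<and> (h has_real_derivative h1 u) (at u)
      \<and> (h1 has_real_derivative h2 u) (at u))"

definition assumptionB :: "(real \<Rightarrow> ereal) \<Rightarrow> bool" where
  "assumptionB g \<longleftrightarrow>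
     lsc_fun g \<and> (\<forall>u. g (- u) = g u) \<and> g 0 = 0
   \<and> (\<exists>u. u \<noteq> 0 \<and> g u < \<infinity>)
   \<and> ( (\<exists>eps>0. \<exists>h2. twice_diff_near0 g eps h2 \<and>
           - \<infinity> < Limsup (at_right 0) (\<lambda>u. ereal (h2 u)) \<and> Limsup (at_right 0) (\<lambda>u. ereal (h2 u)) < 0)
      \<or> (\<exists>eps>0. \<exists>h2. twice_diff_near0 g eps h2 \<and> filterlim h2 at_bot (at_right 0))
      \<or> Liminf (at_right 0) g > 0)
   \<and> (\<forall>u. 0 \<le> g u)"

text \<open>The integral of g(u(x)) over Omega (g is nonnegative, so this is a
  nonnegative Lebesgue integral, possibly infinite).\<close>
definition G_int :: "'a::euclidean_space set \<Rightarrow> (real \<Rightarrow> ereal) \<Rightarrow> ('a \<Rightarrow> real) \<Rightarrow> ereal" where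
  "G_int \<Omega> g u = enn2ereal (\<integral>\<^sup>+ x. e2ennreal (g (u x)) \<partial>(lebesgue_on \<Omega>))"

definition prox_objective ::
  "'a::euclidean_space set \<Rightarrow> (('a \<Rightarrow> real) \<Rightarrow> real) \<Rightarrow> (('a \<Rightarrow> real) \<Rightarrow> ('a \<Rightarrow> real))
   \<Rightarrow> (real \<Rightarrow> ereal) \<Rightarrow> real \<Rightarrow> ('a \<Rightarrow> real) \<Rightarrow> ('a \<Rightarrow> real) \<Rightarrow> ereal" where
  "prox_objective \<Omega> f Df g L uk u =
     ereal (f uk + L2_inner \<Omega> (Df uk) (\<lambda>x. u x - uk x)
            + L / 2 * (L2_norm \<Omega> (\<lambda>x. u x - uk x))\<^sup>2) + G_int \<Omega> g u"

definition prox_grad_iterates ::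
  "'a::euclidean_space set \<Rightarrow> (('a \<Rightarrow> real) \<Rightarrow> real) \<Rightarrow> (('a \<Rightarrow> real) \<Rightarrow> ('a \<Rightarrow> real))
   \<Rightarrow> (real \<Rightarrow> ereal) \<Rightarrow> real \<Rightarrow> (nat \<Rightarrow> 'a \<Rightarrow> real) \<Rightarrow> bool" where
  "prox_grad_iterates \<Omega> f Df g L us \<longleftrightarrow>
     us 0 \<in> L2 \<Omega> \<and>
     (\<forall>k. us (Suc k) \<in> L2 \<Omega> \<and>
        (\<forall>v\<in>L2 \<Omega>. prox_objective \<Omega> f Df g L (us k) (us (Suc k))
                    \<le> prox_objective \<Omega> f Df g L (us k) v))"

end

theory Submission
  imports Defs
begin

lemma L2_lin:
  assumes "u \<in> L2 \<Omega>" "v \<in> L2 \<Omega>"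
  shows "(\<lambda>x. a * u x + b * v x) \<in> L2 \<Omega>"
proof -
  have m[measurable]: "u \<in> borel_measurable (lebesgue_on \<Omega>)" "v \<in> borel_measurable (lebesgue_on \<Omega>)"
    using assms by (auto simp: L2_def)
  have i: "integrable (lebesgue_on \<Omega>) (\<lambda>x. (u x)\<^sup>2)" "integrable (lebesgue_on \<Omega>) (\<lambda>x. (v x)\<^sup>2)"
    using assms by (auto simp: L2_def)
  have I1: "integrable (lebesgue_on \<Omega>) (\<lambda>x. 2*a\<^sup>2 * (u x)\<^sup>2 + 2*b\<^sup>2 * (v x)\<^sup>2)"
    using i by auto
  have B1: "\<And>x. norm ((a * u x + b * v x)\<^sup>2) \<le> norm (2*a\<^sup>2 * (u x)\<^sup>2 + 2*b\<^sup>2 * (v x)\<^sup>2)"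
  proof -
    fix x
    have "(a * u x + b * v x)\<^sup>2 \<le> 2*a\<^sup>2 * (u x)\<^sup>2 + 2*b\<^sup>2 * (v x)\<^sup>2"
      using sum_squares_ge_zero[of "a * u x - b * v x" 0]
      by (simp add: power2_eq_square algebra_simps)
    then show "?thesis x" by simp
  qed
  have M1: "(\<lambda>x. (a * u x + b * v x)\<^sup>2) \<in> borel_measurable (lebesgue_on \<Omega>)" by measurable
  have "integrable (lebesgue_on \<Omega>) (\<lambda>x. (a * u x + b * v x)\<^sup>2)"
    by (rule Bochner_Integration.integrable_bound[OF I1 M1 AE_I2[OF B1]])
  then show ?thesis by (auto simp: L2_def)
qed

lemma L2_prod_int:
  assumes "u \<in> L2 \<Omega>" "v \<in> L2 \<Omega>"
  shows "integrable (lebesgue_on \<Omega>) (\<lambda>x. u x * v x)"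
proof -
  have m[measurable]: "u \<in> borel_measurable (lebesgue_on \<Omega>)" "v \<in> borel_measurable (lebesgue_on \<Omega>)"
    using assms by (auto simp: L2_def)
  have i: "integrable (lebesgue_on \<Omega>) (\<lambda>x. (u x)\<^sup>2)" "integrable (lebesgue_on \<Omega>) (\<lambda>x. (v x)\<^sup>2)"
    using assms by (auto simp: L2_def)
  have I1: "integrable (lebesgue_on \<Omega>) (\<lambda>x. (u x)\<^sup>2 + (v x)\<^sup>2)"
    using i by auto
  have B1: "\<And>x. norm (u x * v x) \<le> norm ((u x)\<^sup>2 + (v x)\<^sup>2)"
  proof -
    fix x
    have "\<bar>u x * v x\<bar> \<le> (u x)\<^sup>2 + (v x)\<^sup>2"
    proof -
      have "0 \<le> (\<bar>u x\<bar> - \<bar>v x\<bar>)\<^sup>2" by simp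
      then have "2 * (\<bar>u x\<bar> * \<bar>v x\<bar>) \<le> (u x)\<^sup>2 + (v x)\<^sup>2"
        by (simp add: power2_eq_square algebra_simps)
      moreover have "0 \<le> \<bar>u x\<bar> * \<bar>v x\<bar>" by simp
      ultimately show ?thesis unfolding abs_mult by linarith
    qed
    then show "?thesis x" by simp
  qed
  have M1: "(\<lambda>x. u x * v x) \<in> borel_measurable (lebesgue_on \<Omega>)" by measurable
  show ?thesis
    by (rule Bochner_Integration.integrable_bound[OF I1 M1 AE_I2[OF B1]])
qed

lemma L2_norm_nonneg: "L2_norm \<Omega> u \<ge> 0"
  unfolding L2_norm_def by (auto intro: integral_nonneg_AE)

lemma L2_norm_sq: "(L2_norm \<Omega> u)\<^sup>2 = integral\<^sup>L (lebesgue_on \<Omega>) (\<lambda>x. (u x)\<^sup>2)"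
  unfolding L2_norm_def by (simp add: integral_nonneg_AE)

lemma L2_norm_scale: "L2_norm \<Omega> (\<lambda>x. t * d x) = \<bar>t\<bar> * L2_norm \<Omega> d"
proof -
  have "(\<lambda>x. (t * d x)\<^sup>2) = (\<lambda>x. t\<^sup>2 * (d x)\<^sup>2)" by (simp add: power_mult_distrib)
  then show ?thesis unfolding L2_norm_def by (simp add: real_sqrt_mult)
qed

lemma L2_inner_scale: "L2_inner \<Omega> a (\<lambda>x. t * d x) = t * L2_inner \<Omega> a d"
proof -
  have "(\<lambda>x. a x * (t * d x)) = (\<lambda>x. t * (a x * d x))" by (simp add: algebra_simps)
  then show ?thesis unfolding L2_inner_def by simp
qed

lemma L2_CS:
  assumes "u \<in> L2 \<Omega>" "v \<in> L2 \<Omega>"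
  shows "L2_inner \<Omega> u v \<le> L2_norm \<Omega> u * L2_norm \<Omega> v"
proof -
  define A where "A = integral\<^sup>L (lebesgue_on \<Omega>) (\<lambda>x. (u x)\<^sup>2)"
  define B where "B = integral\<^sup>L (lebesgue_on \<Omega>) (\<lambda>x. (v x)\<^sup>2)"
  define C where "C = L2_inner \<Omega> u v"
  have i: "integrable (lebesgue_on \<Omega>) (\<lambda>x. (u x)\<^sup>2)" "integrable (lebesgue_on \<Omega>) (\<lambda>x. (v x)\<^sup>2)"
    using assms by (auto simp: L2_def)
  have ip: "integrable (lebesgue_on \<Omega>) (\<lambda>x. u x * v x)" using L2_prod_int[OF assms] .
  have A0: "A \<ge> 0" "B \<ge> 0" unfolding A_def B_def by (auto intro: integral_nonneg_AE)
  have key: "2 * C \<le> s * A + B / s" if s: "s > 0" for s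
  proof -
    have "integral\<^sup>L (lebesgue_on \<Omega>) (\<lambda>x. 2 * (u x * v x)) \<le>
          integral\<^sup>L (lebesgue_on \<Omega>) (\<lambda>x. s * (u x)\<^sup>2 + (v x)\<^sup>2 / s)"
    proof (rule integral_mono)
      show "integrable (lebesgue_on \<Omega>) (\<lambda>x. 2 * (u x * v x))" using ip by auto
      show "integrable (lebesgue_on \<Omega>) (\<lambda>x. s * (u x)\<^sup>2 + (v x)\<^sup>2 / s)" using i by auto
      fix x
      have "0 \<le> (s * u x - v x)\<^sup>2 / s" using s by simp
      also have "(s * u x - v x)\<^sup>2 / s = s * (u x)\<^sup>2 + (v x)\<^sup>2 / s - 2 * (u x * v x)"
        using s by (simp add: power2_eq_square field_simps)
      finally show "2 * (u x * v x) \<le> s * (u x)\<^sup>2 + (v x)\<^sup>2 / s" by simp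
    qed
    then show ?thesis using i unfolding A_def B_def C_def L2_inner_def by simp
  qed
  have "C \<le> sqrt A * sqrt B"
  proof (cases "A = 0 \<or> B = 0")
    case True
    show ?thesis
    proof (rule ccontr)
      assume "\<not> ?thesis"
      then have C: "C > 0" using True by auto
      show False
      proof (cases "A = 0")
        case True
        have "B \<noteq> 0 \<or> B = 0" by simp
        then show False
        proof
          assume "B = 0" then show False using key[of 1] True C by simp
        next
          assume B: "B \<noteq> 0"
          then have "B > 0" using A0 by simp
          then have "2 * C \<le> B / (B / C)" using key[of "B / C"] True C by simp
          then show False using C \<open>B > 0\<close> by simp
        qed
      next
        case False
        then have "A > 0" using A0 by simp
        have "B = 0" using False \<open>A = 0 \<or> B = 0\<close> by simp
        have "2 * C \<le> (C / A) * A" using key[of "C / A"] \<open>B = 0\<close> C \<open>A > 0\<close> by simp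
        then show False using C \<open>A > 0\<close> by simp
      qed
    qed
  next
    case False
    then have AB: "A > 0" "B > 0" using A0 by auto
    define s where "s = sqrt B / sqrt A"
    have s: "s > 0" using AB s_def by simp
    have sa: "sqrt A * sqrt A = A" "sqrt B * sqrt B = B" "sqrt A > 0" "sqrt B > 0" using AB by auto
    have "s * A = sqrt A * sqrt B" using sa unfolding s_def
      by (simp add: field_simps)
    moreover have "B / s = sqrt A * sqrt B" using sa unfolding s_def
      by (simp add: field_simps)
    ultimately show ?thesis using key[OF s] by simp
  qed
  then show ?thesis unfolding C_def A_def B_def L2_norm_def .
qed

lemma L2_zero: "(\<lambda>x. 0) \<in> L2 \<Omega>"
  by (simp add: L2_def)

lemma L2_diff: "u \<in> L2 \<Omega> \<Longrightarrow> v \<in> L2 \<Omega> \<Longrightarrow> (\<lambda>x. u x - v x) \<in> L2 \<Omega>"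
  using L2_lin[of u \<Omega> v 1 "-1"] by simp

lemma L2_inner_diff:
  assumes "a \<in> L2 \<Omega>" "b \<in> L2 \<Omega>" "d \<in> L2 \<Omega>"
  shows "L2_inner \<Omega> a d - L2_inner \<Omega> b d = L2_inner \<Omega> (\<lambda>x. a x - b x) d"
proof -
  have "(\<lambda>x. (a x - b x) * d x) = (\<lambda>x. a x * d x - b x * d x)" by (simp add: algebra_simps)
  then show ?thesis unfolding L2_inner_def
    using L2_prod_int[OF assms(1,3)] L2_prod_int[OF assms(2,3)] by simp
qed

lemma frechet_deriv:
  assumes A: "assumptionA \<Omega> f Df Lf" and u: "u \<in> L2 \<Omega>" and v: "v \<in> L2 \<Omega>"
  defines "w \<equiv> \<lambda>t::real. \<lambda>x. (1 - t) * u x + t * v x"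
  defines "d \<equiv> \<lambda>x. v x - u x"
  shows "((\<lambda>t. f (w t)) has_real_derivative L2_inner \<Omega> (Df (w t0)) d) (at t0)"
proof -
  have wL2: "w t \<in> L2 \<Omega>" for t unfolding w_def using L2_lin[OF u v] .
  have wdiff: "(\<lambda>x. w y x - w t0 x) = (\<lambda>x. (y - t0) * d x)" for y
    unfolding w_def d_def by (rule ext) (simp add: algebra_simps)
  have fr: "\<forall>e>0. \<exists>\<delta>>0. \<forall>z\<in>L2 \<Omega>. L2_norm \<Omega> (\<lambda>x. z x - w t0 x) < \<delta> \<longrightarrow>
        \<bar>f z - f (w t0) - L2_inner \<Omega> (Df (w t0)) (\<lambda>x. z x - w t0 x)\<bar> \<le> e * L2_norm \<Omega> (\<lambda>x. z x - w t0 x)"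
    using A wL2[of t0] unfolding assumptionA_def by blast
  define D where "D = L2_inner \<Omega> (Df (w t0)) d"
  define N where "N = L2_norm \<Omega> d"
  have N0: "N \<ge> 0" unfolding N_def by (rule L2_norm_nonneg)
  have "((\<lambda>y. (f (w y) - f (w t0)) / (y - t0)) \<longlongrightarrow> D) (at t0)"
    unfolding LIM_eq
  proof (intro allI impI)
    fix r :: real assume r: "r > 0"
    define e where "e = r / (2 * (N + 1))"
    have e: "e > 0" using r N0 unfolding e_def by simp
    obtain \<delta> where \<delta>: "\<delta> > 0" and H: "\<forall>z\<in>L2 \<Omega>. L2_norm \<Omega> (\<lambda>x. z x - w t0 x) < \<delta> \<longrightarrow>
        \<bar>f z - f (w t0) - L2_inner \<Omega> (Df (w t0)) (\<lambda>x. z x - w t0 x)\<bar> \<le> e * L2_norm \<Omega> (\<lambda>x. z x - w t0 x)"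
      using fr e by blast
    show "\<exists>s>0. \<forall>y. y \<noteq> t0 \<and> norm (y - t0) < s \<longrightarrow> norm ((f (w y) - f (w t0)) / (y - t0) - D) < r"
    proof (intro exI[of _ "\<delta> / (N + 1)"] conjI allI impI)
      show "\<delta> / (N + 1) > 0" using \<delta> N0 by simp
      fix y assume y: "y \<noteq> t0 \<and> norm (y - t0) < \<delta> / (N + 1)"
      define h where "h = y - t0"
      have h0: "h \<noteq> 0" and hs: "\<bar>h\<bar> < \<delta> / (N + 1)" using y unfolding h_def by auto
      have nrm: "L2_norm \<Omega> (\<lambda>x. w y x - w t0 x) = \<bar>h\<bar> * N"
        unfolding wdiff h_def N_def by (rule L2_norm_scale)
      have inn: "L2_inner \<Omega> (Df (w t0)) (\<lambda>x. w y x - w t0 x) = h * D"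
        unfolding wdiff h_def D_def by (rule L2_inner_scale)
      have "\<bar>h\<bar> * N \<le> \<bar>h\<bar> * (N + 1)" by (simp add: mult_left_mono)
      also have "\<dots> < \<delta>" using hs N0 by (simp add: field_simps)
      finally have "\<bar>h\<bar> * N < \<delta>" .
      then have b: "\<bar>f (w y) - f (w t0) - h * D\<bar> \<le> e * (\<bar>h\<bar> * N)"
        using H wL2[of y] nrm inn by auto
      have "(f (w y) - f (w t0)) / (y - t0) - D = (f (w y) - f (w t0) - h * D) / h"
        using h0 unfolding h_def by (simp add: field_simps)
      then have "norm ((f (w y) - f (w t0)) / (y - t0) - D) = \<bar>f (w y) - f (w t0) - h * D\<bar> / \<bar>h\<bar>"
        by simp
      also have "\<dots> \<le> e * (\<bar>h\<bar> * N) / \<bar>h\<bar>" using b by (rule divide_right_mono) simp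
      also have "\<dots> = e * N" using h0 by simp
      also have "\<dots> = r * (N / (2 * (N + 1)))" unfolding e_def by simp
      also have "\<dots> < r * 1"
      proof (rule mult_strict_left_mono)
        show "N / (2 * (N + 1)) < 1" using N0 by (simp add: field_simps)
      qed (use r in simp)
      also have "\<dots> = r" by simp
      finally show "norm ((f (w y) - f (w t0)) / (y - t0) - D) < r" .
    qed
  qed
  then show ?thesis unfolding D_def by (simp add: has_field_derivative_iff)
qed

lemma descent:
  assumes A: "assumptionA \<Omega> f Df Lf" and u: "u \<in> L2 \<Omega>" and v: "v \<in> L2 \<Omega>"
  shows "f v \<le> f u + L2_inner \<Omega> (Df u) (\<lambda>x. v x - u x) + Lf / 2 * (L2_norm \<Omega> (\<lambda>x. v x - u x))\<^sup>2"
proof -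
  define w where "w = (\<lambda>t::real. \<lambda>x. (1 - t) * u x + t * v x)"
  define d where "d = (\<lambda>x. v x - u x)"
  define I0 where "I0 = L2_inner \<Omega> (Df u) d"
  define N where "N = L2_norm \<Omega> d"
  have wL2: "w t \<in> L2 \<Omega>" for t unfolding w_def using L2_lin[OF u v] .
  have w0: "w 0 = u" and w1: "w 1 = v" unfolding w_def by auto
  have dL2: "d \<in> L2 \<Omega>" unfolding d_def using L2_diff[OF v u] .
  have DfL2: "\<And>z. z \<in> L2 \<Omega> \<Longrightarrow> Df z \<in> L2 \<Omega>" using A unfolding assumptionA_def by blast
  have Lip: "\<And>a b. a \<in> L2 \<Omega> \<Longrightarrow> b \<in> L2 \<Omega> \<Longrightarrow>
        L2_norm \<Omega> (\<lambda>x. Df a x - Df b x) \<le> Lf * L2_norm \<Omega> (\<lambda>x. a x - b x)"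
    using A unfolding assumptionA_def by blast
  have Lf0: "Lf \<ge> 0" using A unfolding assumptionA_def by blast
  have N0: "N \<ge> 0" unfolding N_def by (rule L2_norm_nonneg)
  define \<phi> where "\<phi> = (\<lambda>t. f (w t) - t * I0 - Lf / 2 * t\<^sup>2 * N\<^sup>2)"
  have "\<phi> 0 \<ge> \<phi> 1"
  proof (rule DERIV_nonpos_imp_nonincreasing[of 0 1])
    show "(0::real) \<le> 1" by simp
  next
    fix t :: real assume t: "0 \<le> t" "t \<le> 1"
    have dw: "((\<lambda>t. f (w t)) has_real_derivative L2_inner \<Omega> (Df (w t)) d) (at t)"
      using frechet_deriv[OF A u v, of t] unfolding w_def d_def .
    have "(\<phi> has_real_derivative L2_inner \<Omega> (Df (w t)) d - 1 * I0 - Lf / 2 * (2 * t) * N\<^sup>2) (at t)"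
      unfolding \<phi>_def
      by (auto intro!: derivative_eq_intros dw)
    moreover have "L2_inner \<Omega> (Df (w t)) d - 1 * I0 - Lf / 2 * (2 * t) * N\<^sup>2 \<le> 0"
    proof -
      have "L2_inner \<Omega> (Df (w t)) d - I0 = L2_inner \<Omega> (\<lambda>x. Df (w t) x - Df u x) d"
        unfolding I0_def using L2_inner_diff[OF DfL2[OF wL2] DfL2[OF u] dL2] .
      also have "\<dots> \<le> L2_norm \<Omega> (\<lambda>x. Df (w t) x - Df u x) * N"
        unfolding N_def by (rule L2_CS[OF L2_diff[OF DfL2[OF wL2] DfL2[OF u]] dL2])
      also have "\<dots> \<le> Lf * L2_norm \<Omega> (\<lambda>x. w t x - u x) * N"
        using Lip[OF wL2 u] N0 by (simp add: mult_right_mono)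
      also have "(\<lambda>x. w t x - u x) = (\<lambda>x. t * d x)"
        unfolding w_def d_def by (rule ext) (simp add: algebra_simps)
      also have "Lf * L2_norm \<Omega> (\<lambda>x. t * d x) * N = Lf * t * N\<^sup>2"
        using t by (simp add: L2_norm_scale N_def power2_eq_square)
      finally show ?thesis by simp
    qed
    ultimately show "\<exists>y. (\<phi> has_real_derivative y) (at t) \<and> y \<le> 0" by blast
  qed
  then show ?thesis unfolding \<phi>_def w0 w1 I0_def N_def d_def by simp
qed

lemma sq_summable_tendsto0:
  fixes a :: "nat \<Rightarrow> real"
  assumes "summable (\<lambda>k. (a k)\<^sup>2)"
  shows "a \<longlonglongrightarrow> 0"
proof -
  have "(\<lambda>k. (a k)\<^sup>2) \<longlonglongrightarrow> 0" using summable_LIMSEQ_zero[OF assms] .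
  then have "(\<lambda>k. sqrt ((a k)\<^sup>2)) \<longlonglongrightarrow> sqrt 0" by (rule tendsto_real_sqrt)
  then have "(\<lambda>k. \<bar>a k\<bar>) \<longlonglongrightarrow> 0" by simp
  then show ?thesis by (simp add: tendsto_rabs_zero_iff)
qed

lemma ae_from_summable:
  fixes d :: "nat \<Rightarrow> 'a::euclidean_space \<Rightarrow> real"
  assumes dL2: "\<And>k. d k \<in> L2 \<Omega>"
    and sN: "summable (\<lambda>k. (L2_norm \<Omega> (d k))\<^sup>2)"
  shows "AE x in lebesgue_on \<Omega>. (\<lambda>k. d k x) \<longlonglongrightarrow> 0"
proof -
  let ?M = "lebesgue_on \<Omega>"
  have m[measurable]: "\<And>k. d k \<in> borel_measurable ?M" using dL2 by (auto simp: L2_def)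
  have i: "\<And>k. integrable ?M (\<lambda>x. (d k x)\<^sup>2)" using dL2 by (auto simp: L2_def)
  have nk: "(\<integral>\<^sup>+ x. ennreal ((d k x)\<^sup>2) \<partial>?M) = ennreal ((L2_norm \<Omega> (d k))\<^sup>2)" for k
    unfolding L2_norm_sq by (rule nn_integral_eq_integral[OF i]) auto
  have "(\<integral>\<^sup>+ x. (\<Sum>k. ennreal ((d k x)\<^sup>2)) \<partial>?M) = (\<Sum>k. ennreal ((L2_norm \<Omega> (d k))\<^sup>2))"
  proof -
    have meas: "\<And>k. (\<lambda>x. ennreal ((d k x)\<^sup>2)) \<in> borel_measurable ?M" by measurable
    show ?thesis unfolding nn_integral_suminf[OF meas] nk ..
  qed
  also have "\<dots> = ennreal (\<Sum>k. (L2_norm \<Omega> (d k))\<^sup>2)"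
    by (rule suminf_ennreal2[OF _ sN]) simp
  finally have fin: "(\<integral>\<^sup>+ x. (\<Sum>k. ennreal ((d k x)\<^sup>2)) \<partial>?M) \<noteq> \<infinity>" by simp
  have meas2: "(\<lambda>x. \<Sum>k. ennreal ((d k x)\<^sup>2)) \<in> borel_measurable ?M" by measurable
  have "AE x in ?M. (\<Sum>k. ennreal ((d k x)\<^sup>2)) \<noteq> \<infinity>"
    by (rule nn_integral_noteq_infinite[OF meas2 fin])
  then show ?thesis
  proof (rule AE_mp, intro AE_I2 impI)
    fix x assume "(\<Sum>k. ennreal ((d k x)\<^sup>2)) \<noteq> \<infinity>"
    then have "summable (\<lambda>k. (d k x)\<^sup>2)" by (intro summable_suminf_not_top) auto
    then show "(\<lambda>k. d k x) \<longlonglongrightarrow> 0" by (rule sq_summable_tendsto0)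
  qed
qed

lemma G_int_zero:
  assumes "g 0 = 0"
  shows "G_int \<Omega> g (\<lambda>x. 0) = 0"
  unfolding G_int_def using assms by (simp add: e2ennreal_neg zero_ennreal.rep_eq)

lemma G_int_nonneg: "G_int \<Omega> g u \<ge> 0"
  unfolding G_int_def by simp

theorem corollary4p5:
  fixes \<Omega> :: "'a::euclidean_space set"
    and f :: "('a \<Rightarrow> real) \<Rightarrow> real" and Df :: "('a \<Rightarrow> real) \<Rightarrow> ('a \<Rightarrow> real)"
    and g :: "real \<Rightarrow> ereal" and Lf L :: real and us :: "nat \<Rightarrow> 'a \<Rightarrow> real"
  assumes "\<Omega> \<in> sets lebesgue" and "emeasure lebesgue \<Omega> < \<infinity>"
    and "assumptionA \<Omega> f Df Lf"
    and "assumptionB g"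
    and "L > Lf"
    and "prox_grad_iterates \<Omega> f Df g L us"
  shows "AE x in lebesgue. x \<in> \<Omega> \<longrightarrow> (\<lambda>k. us (Suc k) x - us k x) \<longlonglongrightarrow> 0"
proof -
  note A = assms(3)
  have usL2: "us k \<in> L2 \<Omega>" for k
    using assms(6) unfolding prox_grad_iterates_def by (cases k) auto
  have opt: "prox_objective \<Omega> f Df g L (us k) (us (Suc k)) \<le> prox_objective \<Omega> f Df g L (us k) v"
    if "v \<in> L2 \<Omega>" for k v
    using assms(6) that unfolding prox_grad_iterates_def by blast
  have g0: "g 0 = 0" using assms(4) unfolding assumptionB_def by blast
  obtain c0 where c0: "\<And>u. u \<in> L2 \<Omega> \<Longrightarrow> c0 \<le> f u" using A unfolding assumptionA_def by metis
  define G where "G k = G_int \<Omega> g (us k)" for k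
  define d where "d k = (\<lambda>x. us (Suc k) x - us k x)" for k
  define N where "N k = (L2_norm \<Omega> (d k))\<^sup>2" for k
  define I where "I k = L2_inner \<Omega> (Df (us k)) (d k)" for k
  have N0: "N k \<ge> 0" for k unfolding N_def by simp
  have dL2: "d k \<in> L2 \<Omega>" for k unfolding d_def by (rule L2_diff[OF usL2 usL2])
  have objS: "prox_objective \<Omega> f Df g L (us k) (us (Suc k)) = ereal (f (us k) + I k + L / 2 * N k) + G (Suc k)" for k
    unfolding prox_objective_def I_def N_def d_def G_def ..
  have Gfin: "G (Suc k) \<noteq> \<infinity>" for k
  proof -
    have a: "prox_objective \<Omega> f Df g L (us k) (us (Suc k)) \<le> prox_objective \<Omega> f Df g L (us k) (\<lambda>x. 0)"
      by (rule opt[OF L2_zero])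
    have b: "prox_objective \<Omega> f Df g L (us k) (\<lambda>x. 0) \<noteq> \<infinity>" unfolding prox_objective_def using G_int_zero[of g \<Omega>] g0 by simp
    show ?thesis using a b unfolding objS by (cases "G (Suc k)") auto
  qed
  have Gnn: "G k \<ge> 0" for k unfolding G_def by (rule G_int_nonneg)
  define gg where "gg k = real_of_ereal (G k)" for k
  have Geq: "G (Suc k) = ereal (gg (Suc k))" for k
    unfolding gg_def using Gfin[of k] Gnn[of "Suc k"] by (cases "G (Suc k)") auto
  have gg0: "gg k \<ge> 0" for k unfolding gg_def using Gnn[of k] by (simp add: real_of_ereal_pos)
  define E where "E k = f (us k) + gg k" for k
  have step: "E (Suc (Suc k)) + (L - Lf) / 2 * N (Suc k) \<le> E (Suc k)" for k
  proof -
    have "prox_objective \<Omega> f Df g L (us (Suc k)) (us (Suc (Suc k))) \<le> prox_objective \<Omega> f Df g L (us (Suc k)) (us (Suc k))"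
      by (rule opt[OF usL2])
    also have "prox_objective \<Omega> f Df g L (us (Suc k)) (us (Suc k)) = ereal (f (us (Suc k))) + G (Suc k)"
      unfolding prox_objective_def G_def by (simp add: L2_inner_def L2_norm_def)
    finally have "ereal (f (us (Suc k)) + I (Suc k) + L / 2 * N (Suc k)) + ereal (gg (Suc (Suc k)))
        \<le> ereal (f (us (Suc k))) + ereal (gg (Suc k))"
      unfolding objS Geq .
    then have a: "I (Suc k) + L / 2 * N (Suc k) + gg (Suc (Suc k)) \<le> gg (Suc k)" by simp
    have b: "f (us (Suc (Suc k))) \<le> f (us (Suc k)) + I (Suc k) + Lf / 2 * N (Suc k)"
      using descent[OF A usL2 usL2] unfolding I_def N_def d_def .
    have "(L - Lf) / 2 * N (Suc k) = L / 2 * N (Suc k) - Lf / 2 * N (Suc k)" by (simp add: field_simps)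
    then show ?thesis using a b unfolding E_def by linarith
  qed
  define c where "c = (L - Lf) / 2"
  have c: "c > 0" using assms(5) unfolding c_def by simp
  have tel: "c * (\<Sum>k<n. N (Suc k)) \<le> E 1 - E (Suc n)" for n
  proof (induction n)
    case 0 then show ?case by simp
  next
    case (Suc n)
    then show ?case using step[of n] unfolding c_def by (simp add: algebra_simps)
  qed
  have Elow: "E k \<ge> c0" for k using c0[OF usL2[of k]] gg0[of k] unfolding E_def by simp
  have "summable (\<lambda>k. N (Suc k))"
  proof (rule bounded_imp_summable)
    show "0 \<le> N (Suc n)" for n by (rule N0)
    fix n
    have "c * (\<Sum>k<Suc n. N (Suc k)) \<le> E 1 - c0" using tel[of "Suc n"] Elow[of "Suc (Suc n)"] by simp
    then have "(\<Sum>k<Suc n. N (Suc k)) \<le> (E 1 - c0) / c" using c by (simp add: field_simps)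
    then show "(\<Sum>k\<le>n. N (Suc k)) \<le> (E 1 - c0) / c" by (simp add: lessThan_Suc_atMost)
  qed
  then have "summable N" by (simp add: summable_Suc_iff)
  then have "AE x in lebesgue_on \<Omega>. (\<lambda>k. d k x) \<longlonglongrightarrow> 0"
  proof -
    have Nfun: "N = (\<lambda>k. (L2_norm \<Omega> (d k))\<^sup>2)" by (rule ext) (simp add: N_def)
    have "summable (\<lambda>k. (L2_norm \<Omega> (d k))\<^sup>2)" using \<open>summable N\<close> by (simp only: Nfun)
    then show ?thesis by (rule ae_from_summable[OF dL2])
  qed
  then have "AE x in lebesgue. x \<in> \<Omega> \<longrightarrow> (\<lambda>k. d k x) \<longlonglongrightarrow> 0"
  proof -
    have sp: "\<Omega> \<inter> space lebesgue \<in> sets lebesgue" using assms(1) by simp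
    show ?thesis by (rule AE_restrict_space_iff[OF sp, THEN iffD1]) (rule \<open>AE x in lebesgue_on \<Omega>. (\<lambda>k. d k x) \<longlonglongrightarrow> 0\<close>)
  qed
  then show ?thesis unfolding d_def .
qed

end
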